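(* Let $\lambda\ge 2$ be an integer. For every $f\in\mathcal{F}_{1,1}$ and every $\epsilon\in(0,1)$ there is a ReLU network (whose topology may depend on $f$) using at most $\lambda$ distinct weight values whose output $f''$ satisfies $\sup_{x\in[0,1]}|f''(x)-f(x)|\le\epsilon$, and such that: (i) the depth is $\mathcal{O}\left(\lambda(\log\log(1/\epsilon))^{\frac{1}{\lambda-1}}+\log(1/\epsilon)\right)$; (ii) the number of weights is $\mathcal{O}\left(\lambda(\log\log(1/\epsilon))^{\frac{1}{\lambda-1}+1}+1/\epsilon\right)$; (iii) the number of bits needed to store the network is $\mathcal{O}\left(\log\lambda\left(\lambda(\log\log(1/\epsilon))^{\frac{1}{\lambda-1}+1}+1/\epsilon\right)\right)$.
   Context: A ReLU network is a feedforward network with activation $\sigma(x)=\max(0,x)$, one input unit here, hidden units and one output unit, where each unit connects only to units in the next layer; depth is the number of layers. The $\lambda$ distinct weight values may be any real numbers (nonlinear quantization); each weight is stored with $\log_2\lambda$ bits. $\mathcal{F}_{1,1}$ is the set of functions $f\in\mathscr{W}^{1,\infty}([0,1])$ with $\operatorname{ess\,sup}|f|\le1$ and $\operatorname{ess\,sup}|f'|\le 1$. All logarithms are base 2. *)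

theory Defs
  imports "HOL-Analysis.Analysis"
begin

text \<open>f belongs to W^{1,infinity}([0,1]) with ess sup |f| <= 1 and ess sup |f'| <= 1.
  We use the (absolutely) continuous representative: f is the indefinite integral of
  a weak derivative g with |g| <= 1 almost everywhere on [0,1], and |f| <= 1 on [0,1].\<close>

definition F11 :: "(real \<Rightarrow> real) \<Rightarrow> bool" where
  "F11 f \<longleftrightarrow>
     (\<forall>x\<in>{0..1}. \<bar>f x\<bar> \<le> 1) \<and>
     (\<exists>g. set_integrable lborel {0..1} g \<and>
          (AE t in lborel. t \<in> {0..1} \<longrightarrow> \<bar>g t\<bar> \<le> 1) \<and>
          (\<forall>x\<in>{0..1}. f x = f 0 + (LINT t:{0..x}|lborel. g t)))"

text \<open>A connection from input unit i to
  output unit j is present iff l_W j i = Some w (w its weight); a bias of unit j is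
  present iff l_b j = Some c. Absent connections/biases are not weights.\<close>

record relu_layer =
  l_in :: nat
  l_out :: nat
  l_W :: "nat \<Rightarrow> nat \<Rightarrow> real option"
  l_b :: "nat \<Rightarrow> real option"

type_synonym relu_net = "relu_layer list"

definition valid_net :: "relu_net \<Rightarrow> bool" where
  "valid_net N \<longleftrightarrow> N \<noteq> [] \<and> l_in (hd N) = 1 \<and> l_out (last N) = 1 \<and>
     (\<forall>k. Suc k < length N \<longrightarrow> l_out (N ! k) = l_in (N ! Suc k))"

definition layer_apply :: "relu_layer \<Rightarrow> (nat \<Rightarrow> real) \<Rightarrow> (nat \<Rightarrow> real)" where
  "layer_apply L v = (\<lambda>j. if j < l_out L then
      (\<Sum>i<l_in L. (case l_W L j i of None \<Rightarrow> 0 | Some w \<Rightarrow> w * v i))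
      + (case l_b L j of None \<Rightarrow> 0 | Some c \<Rightarrow> c) else 0)"

definition relu :: "real \<Rightarrow> real" where
  "relu x = max 0 x"

fun net_eval :: "relu_net \<Rightarrow> (nat \<Rightarrow> real) \<Rightarrow> (nat \<Rightarrow> real)" where
  "net_eval [] v = v"
| "net_eval [L] v = layer_apply L v"
| "net_eval (L # N) v = net_eval N (\<lambda>j. relu (layer_apply L v j))"

definition net_fun :: "relu_net \<Rightarrow> real \<Rightarrow> real" where
  "net_fun N x = net_eval N (\<lambda>i. if i = 0 then x else 0) 0"

definition depth :: "relu_net \<Rightarrow> nat" where
  "depth N = length N"

definition weight_pos :: "relu_net \<Rightarrow> (nat \<times> nat \<times> nat) set" where
  "weight_pos N = {(k, j, i). k < length N \<and> j < l_out (N ! k) \<and> i < l_in (N ! k) \<and>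
                               l_W (N ! k) j i \<noteq> None}"

definition bias_pos :: "relu_net \<Rightarrow> (nat \<times> nat) set" where
  "bias_pos N = {(k, j). k < length N \<and> j < l_out (N ! k) \<and> l_b (N ! k) j \<noteq> None}"

definition num_weights :: "relu_net \<Rightarrow> nat" where
  "num_weights N = card (weight_pos N) + card (bias_pos N)"

definition weight_values :: "relu_net \<Rightarrow> real set" where
  "weight_values N =
     {w. \<exists>k j i. (k, j, i) \<in> weight_pos N \<and> l_W (N ! k) j i = Some w} \<union>
     {c. \<exists>k j. (k, j) \<in> bias_pos N \<and> l_b (N ! k) j = Some c}"

definition storage_bits :: "nat \<Rightarrow> relu_net \<Rightarrow> real" where
  "storage_bits lam N = real (num_weights N) * log 2 (real lam)"

end

theory Submission
  imports Defs
begin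

lemma F11_lip:
  assumes "F11 f" "0 \<le> y" "y \<le> x" "x \<le> 1"
  shows "\<bar>f x - f y\<bar> \<le> x - y"
proof -
  obtain g where gi: "set_integrable lborel {0..1} g"
    and gb: "AE t in lborel. t \<in> {0..1} \<longrightarrow> \<bar>g t\<bar> \<le> 1"
    and gf: "\<forall>x\<in>{0..1}. f x = f 0 + (LINT t:{0..x}|lborel. g t)"
    using assms(1) unfolding F11_def by blast
  have un: "{0..x} = {0..y} \<union> {y<..x}" using assms by auto
  have i1: "set_integrable lborel {0..y} g"
    by (rule set_integrable_subset[OF gi]) (use assms in auto)
  have i2: "set_integrable lborel {y<..x} g"
    by (rule set_integrable_subset[OF gi]) (use assms in auto)
  have eq: "(LINT t:{0..x}|lborel. g t) = (LINT t:{0..y}|lborel. g t) + (LINT t:{y<..x}|lborel. g t)"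
    unfolding un by (rule set_integral_Un[OF _ i1 i2]) auto
  have fx: "f x - f y = (LINT t:{y<..x}|lborel. g t)"
  proof -
    have "f x = f 0 + (LINT t:{0..x}|lborel. g t)" using bspec[OF gf, of x] assms by auto
    moreover have "f y = f 0 + (LINT t:{0..y}|lborel. g t)" using bspec[OF gf, of y] assms by auto
    ultimately show ?thesis using eq by simp
  qed
  have ci: "set_integrable lborel {y<..x} (\<lambda>t. c)" for c :: real
  proof -
    have "integrable lborel (\<lambda>t. indicator {y<..x} t *\<^sub>R c)"
      by (rule integrable_indicator) (use assms in \<open>auto simp: ennreal_less_top\<close>)
    then show ?thesis unfolding set_integrable_def by simp
  qed
  have ae: "AE t in lborel. t \<in> {y<..x} \<longrightarrow> \<bar>g t\<bar> \<le> 1"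
    using gb by (rule eventually_mono) (use assms in auto)
  have up: "(LINT t:{y<..x}|lborel. g t) \<le> (LINT t:{y<..x}|lborel. (1::real))"
    by (rule set_integral_mono_AE[OF i2 ci]) (use ae in \<open>auto elim!: eventually_mono\<close>)
  have lo: "(LINT t:{y<..x}|lborel. (-1::real)) \<le> (LINT t:{y<..x}|lborel. g t)"
    by (rule set_integral_mono_AE[OF ci i2]) (use ae in \<open>auto elim!: eventually_mono\<close>)
  have c1: "(LINT t:{y<..x}|lborel. (c::real)) = c * (x - y)" for c
    using set_integral_const[of "{y<..x}" lborel c] assms by (simp add: mult.commute)
  show ?thesis using up lo c1[of 1] c1[of "-1"] fx by auto
qed

fun aseq :: "(real \<Rightarrow> real) \<Rightarrow> real \<Rightarrow> real \<Rightarrow> nat \<Rightarrow> real" where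
  "aseq f h a0 0 = a0"
| "aseq f h a0 (Suc k) = (if aseq f h a0 k \<le> f (real (Suc k) * h) then aseq f h a0 k + h else aseq f h a0 k - h)"

definition sig :: "(real \<Rightarrow> real) \<Rightarrow> real \<Rightarrow> real \<Rightarrow> nat \<Rightarrow> int" where
  "sig f h a0 k = (if aseq f h a0 k \<le> f (real (Suc k) * h) then 1 else -1)"

definition tau :: "(real \<Rightarrow> real) \<Rightarrow> real \<Rightarrow> real \<Rightarrow> nat \<Rightarrow> int" where
  "tau f h a0 k = (if k = 0 then sig f h a0 0 else sig f h a0 k - sig f h a0 (k - 1))"

definition Gf :: "(real \<Rightarrow> real) \<Rightarrow> real \<Rightarrow> real \<Rightarrow> nat \<Rightarrow> real \<Rightarrow> real" where
  "Gf f h a0 N x = a0 + (\<Sum>i<N. of_int (tau f h a0 i) * relu (x - real i * h))"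

lemma aseq_Suc': "aseq f h a0 (Suc k) = aseq f h a0 k + of_int (sig f h a0 k) * h"
  by (simp add: sig_def)

lemma tau_range: "tau f h a0 k \<in> {-2,-1,0,1,2}"
  by (auto simp: tau_def sig_def)

lemma aseq_err:
  assumes lip: "\<And>x y. 0 \<le> y \<Longrightarrow> y \<le> x \<Longrightarrow> x \<le> 1 \<Longrightarrow> \<bar>f x - f y\<bar> \<le> x - y"
    and N: "N > 0" and h: "h = 1 / real N" and a0: "\<bar>a0 - f 0\<bar> \<le> h"
  shows "k \<le> N \<Longrightarrow> \<bar>aseq f h a0 k - f (real k * h)\<bar> \<le> h"
proof (induction k)
  case 0 then show ?case using a0 by simp
next
  case (Suc k)
  have hp: "h > 0" using N h by simp
  have kh: "real (Suc k) * h \<le> 1"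
  proof -
    have "real (Suc k) \<le> real N" using Suc.prems by simp
    then have "real (Suc k) * h \<le> real N * h" using hp by (intro mult_right_mono) auto
    then show ?thesis using N h by simp
  qed
  have d: "\<bar>f (real (Suc k) * h) - f (real k * h)\<bar> \<le> h"
    using lip[of "real k * h" "real (Suc k) * h"] kh hp by (simp add: algebra_simps)
  have ih: "\<bar>aseq f h a0 k - f (real k * h)\<bar> \<le> h" using Suc by simp
  show ?case using d ih by (auto simp del: of_nat_Suc)
qed

lemma H_eq:
  "a0 + (\<Sum>i\<le>k. of_int (tau f h a0 i) * (x - real i * h)) = aseq f h a0 k + of_int (sig f h a0 k) * (x - real k * h)"
proof (induction k)
  case 0 then show ?case by (simp add: tau_def)
next
  case (Suc k)
  have "a0 + (\<Sum>i\<le>Suc k. of_int (tau f h a0 i) * (x - real i * h))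
      = aseq f h a0 k + of_int (sig f h a0 k) * (x - real k * h) + of_int (tau f h a0 (Suc k)) * (x - real (Suc k) * h)"
    using Suc by simp
  also have "\<dots> = aseq f h a0 (Suc k) + of_int (sig f h a0 (Suc k)) * (x - real (Suc k) * h)"
    unfolding aseq_Suc' by (simp add: tau_def algebra_simps)
  finally show ?case .
qed

lemma Gf_piece:
  assumes "k < N" "real k * h \<le> x" "x \<le> real (Suc k) * h" "h > 0"
  shows "Gf f h a0 N x = aseq f h a0 k + of_int (sig f h a0 k) * (x - real k * h)"
proof -
  have "(\<Sum>i<N. of_int (tau f h a0 i) * relu (x - real i * h)) = (\<Sum>i\<le>k. of_int (tau f h a0 i) * relu (x - real i * h))"
  proof (rule sum.mono_neutral_right)
    show "\<forall>i\<in>{..<N} - {..k}. of_int (tau f h a0 i) * relu (x - real i * h) = 0"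
    proof
      fix i assume "i \<in> {..<N} - {..k}"
      then have "real (Suc k) \<le> real i" by auto
      then have "real (Suc k) * h \<le> real i * h" using assms(4) by (intro mult_right_mono) auto
      then show "of_int (tau f h a0 i) * relu (x - real i * h) = 0" using assms(3) by (simp add: relu_def)
    qed
  qed (use assms(1) in auto)
  also have "\<dots> = (\<Sum>i\<le>k. of_int (tau f h a0 i) * (x - real i * h))"
  proof (rule sum.cong)
    fix i assume "i \<in> {..k}"
    then have "real i * h \<le> real k * h" using assms(4) by (intro mult_right_mono) auto
    then show "of_int (tau f h a0 i) * relu (x - real i * h) = of_int (tau f h a0 i) * (x - real i * h)"
      using assms(2) by (simp add: relu_def)
  qed simp
  finally show ?thesis unfolding Gf_def using H_eq by simp
qed

lemma Gf_err:
  assumes lip: "\<And>x y. 0 \<le> y \<Longrightarrow> y \<le> x \<Longrightarrow> x \<le> 1 \<Longrightarrow> \<bar>f x - f y\<bar> \<le> x - y"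
    and N: "N > 0" and h: "h = 1 / real N" and a0: "\<bar>a0 - f 0\<bar> \<le> h"
    and x: "0 \<le> x" "x \<le> 1"
  shows "\<bar>Gf f h a0 N x - f x\<bar> \<le> 3 * h"
proof -
  have hp: "h > 0" using N h by simp
  define k where "k = min (nat \<lfloor>x * real N\<rfloor>) (N - 1)"
  have kN: "k < N" using N by (simp add: k_def)
  have xN: "0 \<le> x * real N" using x by simp
  have k1: "real k * h \<le> x"
  proof -
    have "real k \<le> real (nat \<lfloor>x * real N\<rfloor>)" by (simp add: k_def)
    also have "\<dots> = of_int \<lfloor>x * real N\<rfloor>" using xN by simp
    also have "\<dots> \<le> x * real N" by simp
    finally have "real k \<le> x * real N" .
    then show ?thesis using N unfolding h by (simp add: pos_divide_le_eq)
  qed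
  have k2: "x \<le> real (Suc k) * h"
  proof (cases "nat \<lfloor>x * real N\<rfloor> \<le> N - 1")
    case True
    then have "k = nat \<lfloor>x * real N\<rfloor>" by (simp add: k_def)
    then have "x * real N \<le> real (Suc k)" using xN by linarith
    then show ?thesis using N unfolding h by (simp add: pos_le_divide_eq del: of_nat_Suc)
  next
    case False
    then have "k = N - 1" by (simp add: k_def)
    then have "real (Suc k) = real N" using N by simp
    then show ?thesis using x N h by simp
  qed
  have G: "Gf f h a0 N x = aseq f h a0 k + of_int (sig f h a0 k) * (x - real k * h)"
    by (rule Gf_piece[OF kN k1 k2 hp])
  have e1: "\<bar>aseq f h a0 k - f (real k * h)\<bar> \<le> h"
    using aseq_err[OF lip N h a0] kN by simp
  have e2: "\<bar>f x - f (real k * h)\<bar> \<le> h"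
  proof -
    have "0 \<le> real k * h" using hp by simp
    then have "\<bar>f x - f (real k * h)\<bar> \<le> x - real k * h" using lip k1 x by blast
    then show ?thesis using k2 by (simp add: algebra_simps)
  qed
  have e3: "\<bar>of_int (sig f h a0 k) * (x - real k * h)\<bar> \<le> h"
    using k1 k2 by (auto simp: sig_def algebra_simps)
  show ?thesis using G e1 e2 e3 by linarith
qed

definition mkL :: "nat \<Rightarrow> nat \<Rightarrow> (nat \<Rightarrow> nat \<Rightarrow> bool) \<Rightarrow> (nat \<Rightarrow> nat \<Rightarrow> real) \<Rightarrow> (nat \<Rightarrow> bool) \<Rightarrow> (nat \<Rightarrow> real) \<Rightarrow> relu_layer" where
  "mkL a b P w Q c = \<lparr>l_in = a, l_out = b, l_W = (\<lambda>j i. if P j i then Some (w j i) else None),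
                       l_b = (\<lambda>j. if Q j then Some (c j) else None)\<rparr>"

lemma mkL_simps[simp]:
  "l_in (mkL a b P w Q c) = a" "l_out (mkL a b P w Q c) = b"
  "l_W (mkL a b P w Q c) j i = (if P j i then Some (w j i) else None)"
  "l_b (mkL a b P w Q c) j = (if Q j then Some (c j) else None)"
  by (simp_all add: mkL_def)

lemma la_mkL:
  assumes "j < b"
  shows "layer_apply (mkL a b P w Q c) v j = (\<Sum>i\<in>{i. i < a \<and> P j i}. w j i * v i) + (if Q j then c j else 0)"
proof -
  have "(\<Sum>i\<in>{i. i < a \<and> P j i}. w j i * v i) = (\<Sum>i\<in>{i\<in>{..<a}. P j i}. w j i * v i)"
    by (rule sum.cong) auto
  also have "\<dots> = (\<Sum>i<a. if P j i then w j i * v i else 0)"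
    by (rule sum.inter_filter) simp
  finally show ?thesis using assms unfolding layer_apply_def by (auto intro!: sum.cong)
qed

definition step :: "relu_layer \<Rightarrow> (nat \<Rightarrow> real) \<Rightarrow> (nat \<Rightarrow> real)" where
  "step L v = (\<lambda>j. relu (layer_apply L v j))"

lemma net_eval_Cons: "M \<noteq> [] \<Longrightarrow> net_eval (L # M) v = net_eval M (step L v)"
  by (cases M) (auto simp: step_def)

lemma net_eval_append: "B \<noteq> [] \<Longrightarrow> net_eval (A @ B) v = net_eval B (foldl (\<lambda>v L. step L v) v A)"
  by (induction A arbitrary: v) (auto simp: net_eval_Cons)

lemma relu_pos[simp]: "0 \<le> x \<Longrightarrow> relu x = x" by (simp add: relu_def)
lemma relu_nonneg: "0 \<le> relu x" by (simp add: relu_def)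
lemma relu_relu_sub: "0 \<le> b \<Longrightarrow> relu (relu a - b) = relu (a - b)" by (simp add: relu_def)

definition L1 :: "nat \<Rightarrow> real \<Rightarrow> relu_layer" where
  "L1 n h = mkL 1 (n+2) (\<lambda>j i. j = 0 \<or> j = 1) (\<lambda>j i. 1) (\<lambda>j. j = 1 \<or> j = n \<or> j = n+1)
      (\<lambda>j. if j = 1 then -h else 1)"

definition LT :: "nat \<Rightarrow> real \<Rightarrow> nat \<Rightarrow> relu_layer" where
  "LT n h l = mkL (n+2) (n+2)
     (\<lambda>j i. j < 2^Suc l \<and> (i = j mod 2^l \<or> (i = n \<or> i = n+1) \<and> 2^l \<le> j) \<or> (j = n \<or> j = n+1) \<and> (i = n \<or> i = n+1))
     (\<lambda>j i. if j < 2^Suc l \<and> i \<noteq> j mod 2^l then -h else 1) (\<lambda>j. False) (\<lambda>j. 0)"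

definition LS :: "nat \<Rightarrow> (nat \<Rightarrow> int) \<Rightarrow> relu_layer" where
  "LS n t = mkL (n+2) (n+2)
     (\<lambda>j i. i < n \<and> (j = 0 \<and> 1 \<le> t i \<or> j = 1 \<and> 2 \<le> t i \<or> j = 2 \<and> t i \<le> -1 \<or> j = 3 \<and> t i \<le> -2))
     (\<lambda>j i. 1) (\<lambda>j. j = 4) (\<lambda>j. 1)"

definition LM :: "nat \<Rightarrow> bool \<Rightarrow> relu_layer" where
  "LM n b = mkL (n+2) (n+2)
     (\<lambda>j i. (j = 0 \<or> j = 1) \<and> (i = 2 \<or> i = 3 \<or> i = 4 \<and> b) \<or> j = 2 \<and> (i = 0 \<or> i = 1))
     (\<lambda>j i. 1) (\<lambda>j. j = 4) (\<lambda>j. 1)"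

definition LD :: "nat \<Rightarrow> bool \<Rightarrow> relu_layer" where
  "LD n b = mkL (n+2) (n+2)
     (\<lambda>j i. (j = 0 \<or> j = 1) \<and> (i = 0 \<or> i = 1 \<or> i = 4 \<and> b) \<or> j = 2 \<and> i = 2)
     (\<lambda>j i. 1) (\<lambda>j. j = 4) (\<lambda>j. 1)"

definition LO :: "nat \<Rightarrow> real \<Rightarrow> relu_layer" where
  "LO n h = mkL (n+2) 1 (\<lambda>j i. i = 0 \<or> i = 2) (\<lambda>j i. if i = 0 then -h else 1) (\<lambda>j. True) (\<lambda>j. 1)"

definition TI :: "nat \<Rightarrow> real \<Rightarrow> real \<Rightarrow> nat \<Rightarrow> (nat \<Rightarrow> real) \<Rightarrow> bool" where
  "TI n h x l v \<longleftrightarrow> (\<forall>j<2^l. v j = relu (x - real j * h)) \<and> v n = 2^(l-1) \<and> v (n+1) = 2^(l-1)"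

lemma L1_eval:
  assumes "8 \<le> n" "0 \<le> x"
  shows "TI n h x 1 (step (L1 n h) (\<lambda>i. if i = 0 then x else 0))"
proof -
  let ?v = "\<lambda>i. if i = 0 then x else (0::real)"
  have s01: "{i. i < (1::nat) \<and> (j = 0 \<or> j = 1)} = (if j = 0 \<or> j = 1 then {0} else {})" for j
    by auto
  have "step (L1 n h) ?v 0 = relu x" using assms
    unfolding step_def L1_def by (subst la_mkL) (auto simp: s01)
  moreover have "step (L1 n h) ?v 1 = relu (x - h)" using assms
    unfolding step_def L1_def by (subst la_mkL) (auto simp: s01)
  moreover have "step (L1 n h) ?v n = 1" using assms
    unfolding step_def L1_def by (subst la_mkL) (auto simp: s01)
  moreover have "step (L1 n h) ?v (n+1) = 1" using assms
    unfolding step_def L1_def by (subst la_mkL) (auto simp: s01)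
  ultimately show ?thesis unfolding TI_def
    by (auto simp: less_2_cases_iff)
qed


lemma LT_eval:
  assumes l: "1 \<le> l" "2^Suc l \<le> n" and h: "0 \<le> h" and TI: "TI n h x l v"
  shows "TI n h x (Suc l) (step (LT n h l) v)"
proof -
  have vj: "\<And>j. j < 2^l \<Longrightarrow> v j = relu (x - real j * h)" and vn: "v n = 2^(l-1)" "v (n+1) = 2^(l-1)"
    using TI unfolding TI_def by auto
  have pl: "(2::nat)^l < 2^Suc l" by simp
  have nodes: "step (LT n h l) v j = relu (x - real j * h)" if j: "j < 2^Suc l" for j
  proof (cases "j < 2^l")
    case True
    have jm: "j mod 2^l = j" using True by simp
    have nl: "\<not> 2^l \<le> j" using True by simp
    have jn: "j < n" using j l by linarith
    then have jn2: "j \<noteq> n" "j \<noteq> n+1" "j < n+2" by auto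
    have "{i. i < n+2 \<and> (j < 2^Suc l \<and> (i = j mod 2^l \<or> (i = n \<or> i = n+1) \<and> 2^l \<le> j) \<or> (j = n \<or> j = n+1) \<and> (i = n \<or> i = n+1))} = {j}"
      using j jn2 unfolding jm by (auto simp only: nl simp_thms)
    then have "layer_apply (LT n h l) v j = v j"
      unfolding LT_def using j jn2 jm by (subst la_mkL) simp_all
    then show ?thesis using vj[OF True] True unfolding step_def by (simp add: relu_nonneg)
  next
    case False
    define p where "p = j mod 2^l"
    have p: "p < 2^l" "j = p + 2^l" using False j unfolding p_def
      by (auto simp: le_mod_geq)
    have pn: "p < n" "p \<noteq> n" "p \<noteq> n+1" using p l pl by linarith+
    have jn: "j < n" using j l by linarith
    have jn2: "j \<noteq> n" "j \<noteq> n+1" "j < n+2" "2^l \<le> j" using jn False by auto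
    have "{i. i < n+2 \<and> (j < 2^Suc l \<and> (i = j mod 2^l \<or> (i = n \<or> i = n+1) \<and> 2^l \<le> j) \<or> (j = n \<or> j = n+1) \<and> (i = n \<or> i = n+1))} = {p, n, n+1}"
      using j jn2 pn unfolding p_def[symmetric] by auto
    moreover have "(\<Sum>i\<in>{p, n, n+1}. (if j < 2^Suc l \<and> i \<noteq> p then -h else 1) * v i) = v p + (-h) * v n + (-h) * v (n+1)"
      using pn j by simp
    ultimately have "layer_apply (LT n h l) v j = v p + (-h) * v n + (-h) * v (n+1)"
      unfolding LT_def using jn2 by (subst la_mkL) (simp_all add: p_def)
    also have "\<dots> = relu (x - real p * h) - h * 2^l"
      using vj[OF p(1)] vn l by (cases l) (auto simp: algebra_simps)
    finally have "step (LT n h l) v j = relu (relu (x - real p * h) - h * 2^l)"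
      unfolding step_def by simp
    also have "\<dots> = relu (x - real p * h - h * 2^l)" using h by (simp add: relu_relu_sub)
    also have "\<dots> = relu (x - real j * h)" using p by (simp add: algebra_simps)
    finally show ?thesis .
  qed
  have cst: "step (LT n h l) v j = 2^l" if j: "j = n \<or> j = n+1" for j
  proof -
    have "\<not> j < 2^Suc l" using j l by auto
    then have "{i. i < n+2 \<and> (j < 2^Suc l \<and> (i = j mod 2^l \<or> (i = n \<or> i = n+1) \<and> 2^l \<le> j) \<or> (j = n \<or> j = n+1) \<and> (i = n \<or> i = n+1))} = {n, n+1}"
      using j by auto
    moreover have "j < n+2" using j by auto
    ultimately have "layer_apply (LT n h l) v j = v n + v (n+1)"
      unfolding LT_def using \<open>\<not> j < 2^Suc l\<close> by (subst la_mkL) auto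
    also have "\<dots> = 2^l" using vn l by (cases l) auto
    finally show ?thesis unfolding step_def by simp
  qed
  show ?thesis unfolding TI_def using nodes cst by auto
qed

lemma tree_eval:
  assumes "TI n h x 1 v" "0 \<le> h" "2^m \<le> n"
  shows "1 \<le> l \<Longrightarrow> l \<le> m \<Longrightarrow> TI n h x l (foldl (\<lambda>v L. step L v) v (map (LT n h) [1..<l]))"
proof (induction l)
  case 0 then show ?case by simp
next
  case (Suc l)
  show ?case
  proof (cases "l = 0")
    case True then show ?thesis using assms by simp
  next
    case False
    have "2^Suc l \<le> (2::nat)^m" using Suc.prems by (intro power_increasing) auto
    then have "2^Suc l \<le> n" using assms by linarith
    moreover have "TI n h x l (foldl (\<lambda>v L. step L v) v (map (LT n h) [1..<l]))"
      using Suc False by simp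
    ultimately show ?thesis using LT_eval[of l n h x] False assms by simp
  qed
qed


definition Ssum :: "nat \<Rightarrow> real \<Rightarrow> real \<Rightarrow> (nat \<Rightarrow> bool) \<Rightarrow> real" where
  "Ssum n h x Q = (\<Sum>i\<in>{i. i < n \<and> Q i}. relu (x - real i * h))"

lemma Ssum_nonneg: "0 \<le> Ssum n h x Q"
  unfolding Ssum_def by (rule sum_nonneg) (simp add: relu_nonneg)

lemma LS_eval:
  assumes "8 \<le> n" and v: "\<And>i. i < n \<Longrightarrow> v i = relu (x - real i * h)"
  shows "step (LS n t) v 0 = Ssum n h x (\<lambda>i. 1 \<le> t i)"
    "step (LS n t) v 1 = Ssum n h x (\<lambda>i. 2 \<le> t i)"
    "step (LS n t) v 2 = Ssum n h x (\<lambda>i. t i \<le> -1)"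
    "step (LS n t) v 3 = Ssum n h x (\<lambda>i. t i \<le> -2)"
    "step (LS n t) v 4 = 1"
proof -
  have gen: "(\<Sum>i\<in>{i. i < n+2 \<and> i < n \<and> Q i}. 1 * v i) = Ssum n h x Q" for Q
  proof -
    have "{i. i < n+2 \<and> i < n \<and> Q i} = {i. i < n \<and> Q i}" by auto
    then show ?thesis unfolding Ssum_def using v by (auto intro!: sum.cong)
  qed
  show "step (LS n t) v 0 = Ssum n h x (\<lambda>i. 1 \<le> t i)"
    unfolding step_def LS_def using assms gen[of "\<lambda>i. 1 \<le> t i"] Ssum_nonneg by (subst la_mkL) auto
  show "step (LS n t) v 1 = Ssum n h x (\<lambda>i. 2 \<le> t i)"
    unfolding step_def LS_def using assms gen[of "\<lambda>i. 2 \<le> t i"] Ssum_nonneg by (subst la_mkL) auto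
  show "step (LS n t) v 2 = Ssum n h x (\<lambda>i. t i \<le> -1)"
    unfolding step_def LS_def using assms gen[of "\<lambda>i. t i \<le> -1"] Ssum_nonneg by (subst la_mkL) auto
  show "step (LS n t) v 3 = Ssum n h x (\<lambda>i. t i \<le> -2)"
    unfolding step_def LS_def using assms gen[of "\<lambda>i. t i \<le> -2"] Ssum_nonneg by (subst la_mkL) auto
  show "step (LS n t) v 4 = 1"
    unfolding step_def LS_def using assms by (subst la_mkL) auto
qed

lemma LM_eval:
  assumes "8 \<le> n" "0 \<le> v 0" "0 \<le> v 1" "0 \<le> v 2" "0 \<le> v 3" "v 4 = 1"
  shows "step (LM n b) v 0 = v 2 + v 3 + (if b then 1 else 0)"
    "step (LM n b) v 1 = v 2 + v 3 + (if b then 1 else 0)"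
    "step (LM n b) v 2 = v 0 + v 1"
    "step (LM n b) v 4 = 1"
proof -
  have s: "{i. i < Suc (Suc n) \<and> (i = 2 \<or> i = 3 \<or> i = 4)} = {2,3,4}"
    "{i. i < Suc (Suc n) \<and> (i = 2 \<or> i = 3)} = {2,3}"
    using assms(1) by auto
  have s2: "{i. i < Suc (Suc n) \<and> (i = 0 \<or> i = Suc 0)} = {0,1}"
    using assms(1) by auto
  show "step (LM n b) v 0 = v 2 + v 3 + (if b then 1 else 0)"
    unfolding step_def LM_def using assms by (subst la_mkL) (auto simp: s)
  show "step (LM n b) v 1 = v 2 + v 3 + (if b then 1 else 0)"
    unfolding step_def LM_def using assms by (subst la_mkL) (auto simp: s)
  show "step (LM n b) v 2 = v 0 + v 1"
    unfolding step_def LM_def using assms by (subst la_mkL) (auto simp: s2)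
  show "step (LM n b) v 4 = 1"
    unfolding step_def LM_def using assms by (subst la_mkL) auto
qed

lemma LD_eval:
  assumes "8 \<le> n" "0 \<le> v 0" "v 1 = v 0" "0 \<le> v 2" "v 4 = 1"
  shows "step (LD n b) v 0 = 2 * v 0 + (if b then 1 else 0)"
    "step (LD n b) v 1 = 2 * v 0 + (if b then 1 else 0)"
    "step (LD n b) v 2 = v 2"
    "step (LD n b) v 4 = 1"
proof -
  have s: "{i. i < Suc (Suc n) \<and> (i = 0 \<or> i = Suc 0 \<or> i = 4)} = {0,1,4}"
    "{i. i < Suc (Suc n) \<and> (i = 0 \<or> i = Suc 0)} = {0,1}"
    using assms(1) by auto
  have s2: "{i. i < Suc (Suc n) \<and> i = 2} = {2}"
    using assms(1) by auto
  show "step (LD n b) v 0 = 2 * v 0 + (if b then 1 else 0)"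
    unfolding step_def LD_def using assms by (subst la_mkL) (auto simp: s)
  show "step (LD n b) v 1 = 2 * v 0 + (if b then 1 else 0)"
    unfolding step_def LD_def using assms by (subst la_mkL) (auto simp: s)
  show "step (LD n b) v 2 = v 2"
    unfolding step_def LD_def using assms by (subst la_mkL) (auto simp: s2)
  show "step (LD n b) v 4 = 1"
    unfolding step_def LD_def using assms by (subst la_mkL) auto
qed

lemma LO_eval:
  assumes "8 \<le> n"
  shows "layer_apply (LO n h) v 0 = v 2 - h * v 0 + 1"
proof -
  have s: "{i. i < Suc (Suc n) \<and> (i = 0 \<or> i = 2)} = {0,2}"
    using assms(1) by auto
  show ?thesis unfolding LO_def by (subst la_mkL) (auto simp: s)
qed


definition netA :: "nat \<Rightarrow> real \<Rightarrow> (nat \<Rightarrow> int) \<Rightarrow> nat \<Rightarrow> relu_net" where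
  "netA m h t K = L1 (2^m) h # map (LT (2^m) h) [1..<m] @ [LS (2^m) t, LM (2^m) (odd (K div 2^m))]
     @ map (\<lambda>i. LD (2^m) (odd (K div 2^(m - Suc i)))) [0..<m]"

definition netw :: "nat \<Rightarrow> real \<Rightarrow> (nat \<Rightarrow> int) \<Rightarrow> nat \<Rightarrow> relu_net" where
  "netw m h t K = netA m h t K @ [LO (2^m) h]"

lemma div_step:
  fixes K :: nat
  assumes "i < m"
  shows "2 * (K div 2^(m - i)) + (if odd (K div 2^(m - Suc i)) then 1 else 0) = K div 2^(m - Suc i)"
proof -
  have e: "m - i = Suc (m - Suc i)" using assms by simp
  have "K div 2^(m - i) = K div (2^(m - Suc i) * 2)"
    unfolding e by (simp add: mult.commute)
  also have "\<dots> = K div 2^(m - Suc i) div 2" by (rule div_mult2_eq)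
  finally have e2: "K div 2^(m - i) = K div 2^(m - Suc i) div 2" .
  have g: "2 * (q div 2) + (if odd q then 1 else 0) = q" for q :: nat
    using div_mult_mod_eq[of q 2] by (auto simp: odd_iff_mod_2_eq_one even_iff_mod_2_eq_zero)
  show ?thesis unfolding e2 by (rule g)
qed

lemma dbl_eval:
  assumes "8 \<le> n" "0 \<le> S" "0 \<le> P" "w 0 = S + real (K div 2^m)" "w 1 = w 0" "w 2 = P" "w 4 = 1"
  shows "i \<le> m \<Longrightarrow> (let z = foldl (\<lambda>v L. step L v) w (map (\<lambda>i. LD n (odd (K div 2^(m - Suc i)))) [0..<i]) in
     z 0 = 2^i * S + real (K div 2^(m - i)) \<and> z 1 = z 0 \<and> z 2 = P \<and> z 4 = 1)"
proof (induction i)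
  case 0 then show ?case using assms by simp
next
  case (Suc i)
  define z where "z = foldl (\<lambda>v L. step L v) w (map (\<lambda>i. LD n (odd (K div 2^(m - Suc i)))) [0..<i])"
  have zi: "z 0 = 2^i * S + real (K div 2^(m - i))" "z 1 = z 0" "z 2 = P" "z 4 = 1"
    using Suc unfolding z_def Let_def by auto
  have z0: "0 \<le> z 0" using zi assms by simp
  have im: "i < m" using Suc by simp
  have ds: "real (2 * (K div 2^(m - i)) + (if odd (K div 2^(m - Suc i)) then 1 else 0)) = real (K div 2^(m - Suc i))"
    using div_step[OF im, of K] by presburger
  have "foldl (\<lambda>v L. step L v) w (map (\<lambda>i. LD n (odd (K div 2^(m - Suc i)))) [0..<Suc i])
      = step (LD n (odd (K div 2^(m - Suc i)))) z" unfolding z_def by simp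
  moreover have "step (LD n (odd (K div 2^(m - Suc i)))) z 0 = 2^Suc i * S + real (K div 2^(m - Suc i))"
    using LD_eval(1)[OF assms(1) z0 zi(2) _ zi(4)] zi assms ds by (auto simp: algebra_simps)
  moreover have "step (LD n (odd (K div 2^(m - Suc i)))) z 1 = step (LD n (odd (K div 2^(m - Suc i)))) z 0"
    using LD_eval(1,2)[OF assms(1) z0 zi(2) _ zi(4)] zi assms by simp
  moreover have "step (LD n (odd (K div 2^(m - Suc i)))) z 2 = P"
    using LD_eval(3)[OF assms(1) z0 zi(2) _ zi(4)] zi assms by simp
  moreover have "step (LD n (odd (K div 2^(m - Suc i)))) z 4 = 1"
    using LD_eval(4)[OF assms(1) z0 zi(2) _ zi(4)] zi assms by simp
  ultimately show ?case unfolding Let_def by simp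
qed

lemma netw_eval:
  assumes m: "3 \<le> m" and h: "0 \<le> h" and x: "0 \<le> x" and K: "K < 2 * 2^m"
  shows "net_fun (netw m h t K) x =
     (Ssum (2^m) h x (\<lambda>i. 1 \<le> t i) + Ssum (2^m) h x (\<lambda>i. 2 \<le> t i))
     - h * (2^m * (Ssum (2^m) h x (\<lambda>i. t i \<le> -1) + Ssum (2^m) h x (\<lambda>i. t i \<le> -2)) + real K) + 1"
proof -
  define n where "n = (2::nat)^m"
  have "(2::nat)^3 \<le> 2^m" by (rule power_increasing[OF m]) simp
  then have n8: "8 \<le> n" unfolding n_def by simp
  define v0 where "v0 = (\<lambda>i::nat. if i = 0 then x else (0::real))"
  define v1 where "v1 = step (L1 n h) v0"
  have t1: "TI n h x 1 v1" unfolding v1_def v0_def by (rule L1_eval[OF n8 x])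
  define vT where "vT = foldl (\<lambda>v L. step L v) v1 (map (LT n h) [1..<m])"
  have tm: "TI n h x m vT" unfolding vT_def using tree_eval[OF t1 h, of m m] m n_def by auto
  have vT: "\<And>i. i < n \<Longrightarrow> vT i = relu (x - real i * h)" using tm unfolding TI_def n_def by auto
  define u where "u = step (LS n t) vT"
  note us = LS_eval[OF n8 vT, of t, folded u_def]
  define P where "P = Ssum n h x (\<lambda>i. 1 \<le> t i) + Ssum n h x (\<lambda>i. 2 \<le> t i)"
  define S where "S = Ssum n h x (\<lambda>i. t i \<le> -1) + Ssum n h x (\<lambda>i. t i \<le> -2)"
  define w where "w = step (LM n (odd (K div 2^m))) u"
  have Kd: "K div 2^m < 2" using K by (simp add: div_less_iff_less_mult)
  have bK: "(if odd (K div 2^m) then 1 else 0) = real (K div 2^m)"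
  proof -
    have "K div 2^m = 0 \<or> K div 2^m = 1" using Kd by linarith
    then show ?thesis by auto
  qed
  have ws: "w 0 = S + real (K div 2^m)" "w 1 = w 0" "w 2 = P" "w 4 = 1"
    using LM_eval[OF n8, of u "odd (K div 2^m)"] us Ssum_nonneg bK unfolding w_def S_def P_def
    by (auto simp: algebra_simps)
  have S0: "0 \<le> S" "0 \<le> P" unfolding S_def P_def by (simp_all add: Ssum_nonneg add_nonneg_nonneg)
  define z where "z = foldl (\<lambda>v L. step L v) w (map (\<lambda>i. LD n (odd (K div 2^(m - Suc i)))) [0..<m])"
  have zs: "z 0 = 2^m * S + real K" "z 2 = P"
    using dbl_eval[OF n8 S0 ws, of m] unfolding z_def Let_def by auto
  have "foldl (\<lambda>v L. step L v) v0 (netA m h t K) = z"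
    unfolding netA_def z_def w_def u_def vT_def v1_def n_def by simp
  then have "net_fun (netw m h t K) x = layer_apply (LO n h) z 0"
    unfolding net_fun_def netw_def v0_def[symmetric] n_def by (subst net_eval_append) auto
  also have "\<dots> = P - h * (2^m * S + real K) + 1" using LO_eval[OF n8] zs by simp
  finally show ?thesis unfolding P_def S_def n_def .
qed

definition lw :: "relu_layer \<Rightarrow> (nat \<times> nat) set" where
  "lw L = {(j,i). j < l_out L \<and> i < l_in L \<and> l_W L j i \<noteq> None}"
definition lbs :: "relu_layer \<Rightarrow> nat set" where
  "lbs L = {j. j < l_out L \<and> l_b L j \<noteq> None}"
definition lc :: "relu_layer \<Rightarrow> nat" where
  "lc L = card (lw L) + card (lbs L)"

lemma finite_lw: "finite (lw L)"
proof -
  have "lw L \<subseteq> {..<l_out L} \<times> {..<l_in L}" unfolding lw_def by auto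
  then show ?thesis by (rule finite_subset) auto
qed

lemma finite_lbs: "finite (lbs L)"
  unfolding lbs_def by auto

lemma num_weights_le: "num_weights Net \<le> sum_list (map lc Net)"
proof -
  have wp: "weight_pos Net = (\<Union>k\<in>{..<length Net}. (\<lambda>(j,i). (k,j,i)) ` lw (Net!k))"
    unfolding weight_pos_def lw_def by auto
  have bp: "bias_pos Net = (\<Union>k\<in>{..<length Net}. (\<lambda>j. (k,j)) ` lbs (Net!k))"
    unfolding bias_pos_def lbs_def by auto
  have "card (weight_pos Net) \<le> (\<Sum>k<length Net. card ((\<lambda>(j,i). (k,j,i)) ` lw (Net!k)))"
    unfolding wp by (rule card_UN_le) simp
  also have "\<dots> \<le> (\<Sum>k<length Net. card (lw (Net!k)))"
    by (rule sum_mono) (rule card_image_le[OF finite_lw])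
  finally have 1: "card (weight_pos Net) \<le> (\<Sum>k<length Net. card (lw (Net!k)))" .
  have "card (bias_pos Net) \<le> (\<Sum>k<length Net. card ((\<lambda>j. (k,j)) ` lbs (Net!k)))"
    unfolding bp by (rule card_UN_le) simp
  also have "\<dots> \<le> (\<Sum>k<length Net. card (lbs (Net!k)))"
    by (rule sum_mono) (rule card_image_le[OF finite_lbs])
  finally have 2: "card (bias_pos Net) \<le> (\<Sum>k<length Net. card (lbs (Net!k)))" .
  have 3: "sum_list (map lc Net) = (\<Sum>k<length Net. lc (Net!k))"
    by (simp add: sum_list_sum_nth atLeast0LessThan)
  show ?thesis unfolding num_weights_def 3 lc_def sum.distrib using 1 2 by linarith
qed

lemma card3: "card {a, b, c::'a} \<le> 3"
proof -
  have "card {c} \<le> 1" by simp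
  then have "card {b, c} \<le> 2" by (intro card_insert_le_m1) auto
  then show ?thesis by (intro card_insert_le_m1) auto
qed

lemma card_le_sub: "A \<subseteq> B \<Longrightarrow> card B \<le> k \<Longrightarrow> finite B \<Longrightarrow> card A \<le> k"
  using card_mono[of B A] by linarith

lemma lc_L1: "lc (L1 n h) \<le> 5"
proof -
  have "lw (L1 n h) \<subseteq> {(0,0),(1,0)}" unfolding lw_def L1_def by (auto split: if_splits)
  then have "card (lw (L1 n h)) \<le> 2" by (rule card_le_sub) (auto simp: card_insert_if)
  moreover have "lbs (L1 n h) \<subseteq> {1, n, n+1}" unfolding lbs_def L1_def by (auto split: if_splits)
  then have "card (lbs (L1 n h)) \<le> 3" by (rule card_le_sub) (auto simp: card3)
  ultimately show ?thesis unfolding lc_def by simp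
qed

lemma lc_LT: "lc (LT n h l) \<le> 3 * 2^Suc l + 4"
proof -
  have "lw (LT n h l) \<subseteq> (\<Union>j\<in>{..<2^Suc l}. {j} \<times> {j mod 2^l, n, n+1}) \<union> ({n, n+1} \<times> {n, n+1})"
    unfolding lw_def LT_def by auto
  moreover have "card ((\<Union>j\<in>{..<2^Suc l}. {j} \<times> {j mod 2^l, n, n+1}) \<union> ({n, n+1} \<times> {n, n+1})) \<le> 3 * 2^Suc l + 4"
  proof -
    have "card (\<Union>j\<in>{..<(2::nat)^Suc l}. {j} \<times> {j mod 2^l, n, n+1}) \<le> (\<Sum>j<(2::nat)^Suc l. card ({j} \<times> {j mod 2^l, n, n+1}))"
      by (rule card_UN_le) simp
    also have "\<dots> \<le> (\<Sum>j<(2::nat)^Suc l. 3)"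
      by (rule sum_mono) (simp add: card_cartesian_product card3)
    finally have a: "card (\<Union>j\<in>{..<(2::nat)^Suc l}. {j} \<times> {j mod 2^l, n, n+1}) \<le> 3 * 2^Suc l" by simp
    have b: "card ({n, n+1} \<times> {n, n+1}) \<le> 4" by (simp add: card_cartesian_product)
    show ?thesis using card_Un_le[of "(\<Union>j\<in>{..<(2::nat)^Suc l}. {j} \<times> {j mod 2^l, n, n+1})" "{n, n+1} \<times> {n, n+1}"] a b
      by linarith
  qed
  ultimately have "card (lw (LT n h l)) \<le> 3 * 2^Suc l + 4" by (rule card_le_sub) auto
  moreover have "lbs (LT n h l) = {}" unfolding lbs_def LT_def by auto
  ultimately show ?thesis unfolding lc_def by simp
qed

lemma lc_LS: "lc (LS n t) \<le> 4 * n + 1"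
proof -
  have "lw (LS n t) \<subseteq> {0,1,2,3} \<times> {..<n}" unfolding lw_def LS_def by auto
  then have "card (lw (LS n t)) \<le> 4 * n" by (rule card_le_sub) (auto simp: card_cartesian_product)
  moreover have "lbs (LS n t) \<subseteq> {4}" unfolding lbs_def LS_def by auto
  then have "card (lbs (LS n t)) \<le> 1" by (rule card_le_sub) auto
  ultimately show ?thesis unfolding lc_def by simp
qed

lemma lc_LM: "lc (LM n b) \<le> 16"
proof -
  have "lw (LM n b) \<subseteq> {0,1,2} \<times> {0,1,2,3,4}" unfolding lw_def LM_def by auto
  then have "card (lw (LM n b)) \<le> 15" by (rule card_le_sub) (auto simp: card_cartesian_product)
  moreover have "lbs (LM n b) \<subseteq> {4}" unfolding lbs_def LM_def by auto
  then have "card (lbs (LM n b)) \<le> 1" by (rule card_le_sub) auto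
  ultimately show ?thesis unfolding lc_def by simp
qed


lemma lc_LD: "lc (LD n b) \<le> 16"
proof -
  have "lw (LD n b) \<subseteq> {0,1,2} \<times> {0,1,2,3,4}" unfolding lw_def LD_def by auto
  then have "card (lw (LD n b)) \<le> 15" by (rule card_le_sub) (auto simp: card_cartesian_product)
  moreover have "lbs (LD n b) \<subseteq> {4}" unfolding lbs_def LD_def by auto
  then have "card (lbs (LD n b)) \<le> 1" by (rule card_le_sub) auto
  ultimately show ?thesis unfolding lc_def by simp
qed

lemma lc_LO: "lc (LO n h) \<le> 3"
proof -
  have "lw (LO n h) \<subseteq> {0} \<times> {0,2}" unfolding lw_def LO_def by auto
  then have "card (lw (LO n h)) \<le> 2" by (rule card_le_sub) (auto simp: card_cartesian_product)
  moreover have "lbs (LO n h) \<subseteq> {0}" unfolding lbs_def LO_def by auto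
  then have "card (lbs (LO n h)) \<le> 1" by (rule card_le_sub) auto
  ultimately show ?thesis unfolding lc_def by simp
qed

lemma pow_sum_le: "(\<Sum>l<m. (2::nat)^l) < 2^m"
  by (induction m) auto

lemma netw_depth: "1 \<le> m \<Longrightarrow> depth (netw m h t K) = 2 * m + 3"
  unfolding depth_def netw_def netA_def by simp

lemma netw_weights:
  assumes "3 \<le> m"
  shows "num_weights (netw m h t K) \<le> 40 * 2^m"
proof -
  let ?n = "(2::nat)^m"
  have tr: "sum_list (map lc (map (LT ?n h) [1..<m])) \<le> 6 * 2^m + 4 * m"
  proof -
    have "sum_list (map lc (map (LT ?n h) [1..<m])) \<le> sum_list (map (\<lambda>l. 3 * 2^Suc l + 4) [1..<m])"
      unfolding map_map comp_def by (rule sum_list_mono, rule order.trans[OF lc_LT], simp)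
    also have "\<dots> = (\<Sum>l\<in>{1..<m}. 3 * 2^Suc l + 4)"
      by (simp add: interv_sum_list_conv_sum_set_nat)
    also have "\<dots> \<le> (\<Sum>l<m. 3 * 2^Suc l + 4)"
      by (rule sum_mono2) auto
    also have "\<dots> = 6 * (\<Sum>l<m. 2^l) + 4 * m"
      by (simp add: sum.distrib sum_distrib_left)
    also have "\<dots> \<le> 6 * 2^m + 4 * m" using pow_sum_le[of m] by simp
    finally show ?thesis .
  qed
  have db: "sum_list (map lc (map (\<lambda>i. LD ?n (odd (K div 2^(m - Suc i)))) [0..<m])) \<le> 16 * m"
  proof -
    have "sum_list (map lc (map (\<lambda>i. LD ?n (odd (K div 2^(m - Suc i)))) [0..<m])) \<le> sum_list (map (\<lambda>i. 16) [0..<m])"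
      unfolding map_map comp_def by (rule sum_list_mono) (simp add: lc_LD)
    also have "\<dots> = 16 * m" by (simp add: sum_list_triv)
    finally show ?thesis .
  qed
  have mle: "m < 2^m" by (rule less_exp)
  have "num_weights (netw m h t K) \<le> sum_list (map lc (netw m h t K))" by (rule num_weights_le)
  also have "\<dots> = lc (L1 ?n h) + sum_list (map lc (map (LT ?n h) [1..<m])) + lc (LS ?n t)
      + lc (LM ?n (odd (K div 2^m))) + sum_list (map lc (map (\<lambda>i. LD ?n (odd (K div 2^(m - Suc i)))) [0..<m]))
      + lc (LO ?n h)"
    unfolding netw_def netA_def by simp
  also have "\<dots> \<le> 5 + (6 * 2^m + 4 * m) + (4 * 2^m + 1) + 16 + 16 * m + 3"
    using lc_L1[of ?n h] tr lc_LS[of ?n t] lc_LM[of ?n "odd (K div 2^m)"] db lc_LO[of ?n h] by linarith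
  also have "\<dots> \<le> 40 * 2^m"
  proof -
    have "(2::nat)^3 \<le> 2^m" by (rule power_increasing[OF assms]) simp
    then show ?thesis using mle by linarith
  qed
  finally show ?thesis .
qed

lemma valid_chain:
  assumes "l_in A = 1" "l_out A = w" "\<forall>L\<in>set M. l_in L = w \<and> l_out L = w" "l_in B = w" "l_out B = 1"
  shows "valid_net (A # M @ [B])"
  unfolding valid_net_def
proof (intro conjI allI impI)
  fix k assume k: "Suc k < length (A # M @ [B])"
  have o: "l_out ((A # M @ [B]) ! k) = w"
  proof (cases k)
    case 0 then show ?thesis using assms by simp
  next
    case (Suc k')
    then have "k' < length M" using k by simp
    then show ?thesis using Suc assms(3) by (simp add: nth_append)
  qed
  have i: "l_in ((A # M @ [B]) ! Suc k) = w"
  proof (cases "k < length M")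
    case True then show ?thesis using assms(3) by (simp add: nth_append)
  next
    case False
    then have "k = length M" using k by simp
    then show ?thesis using assms(4) by simp
  qed
  show "l_out ((A # M @ [B]) ! k) = l_in ((A # M @ [B]) ! Suc k)" using o i by simp
qed (use assms in auto)

lemma netw_valid: "valid_net (netw m h t K)"
proof -
  have "netw m h t K = L1 (2^m) h # (map (LT (2^m) h) [1..<m] @ [LS (2^m) t, LM (2^m) (odd (K div 2^m))]
     @ map (\<lambda>i. LD (2^m) (odd (K div 2^(m - Suc i)))) [0..<m]) @ [LO (2^m) h]"
    unfolding netw_def netA_def by simp
  also have "valid_net \<dots>"
    by (rule valid_chain[where w = "2^m + 2"]) (auto simp: L1_def LT_def LS_def LM_def LD_def LO_def)
  finally show ?thesis .
qed

lemma wv_sub: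
  assumes "\<forall>L\<in>set Net. \<forall>j i w. l_W L j i = Some w \<longrightarrow> w \<in> V"
    "\<forall>L\<in>set Net. \<forall>j c. l_b L j = Some c \<longrightarrow> c \<in> V"
  shows "weight_values Net \<subseteq> V"
  unfolding weight_values_def weight_pos_def bias_pos_def
  using assms nth_mem by fastforce

lemma netw_wv: "weight_values (netw m h t K) \<subseteq> {1, -h}"
proof (rule wv_sub)
  show "\<forall>L\<in>set (netw m h t K). \<forall>j i w. l_W L j i = Some w \<longrightarrow> w \<in> {1, -h}"
    unfolding netw_def netA_def by (auto simp: L1_def LT_def LS_def LM_def LD_def LO_def split: if_splits)
  show "\<forall>L\<in>set (netw m h t K). \<forall>j c. l_b L j = Some c \<longrightarrow> c \<in> {1, -h}"
    unfolding netw_def netA_def by (auto simp: L1_def LT_def LS_def LM_def LD_def LO_def split: if_splits)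
qed

lemma netw_card: "card (weight_values (netw m h t K)) \<le> 2"
proof -
  have "card (weight_values (netw m h t K)) \<le> card {1, -h}"
    by (rule card_mono[OF _ netw_wv]) simp
  also have "\<dots> \<le> 2" by (simp add: card_insert_if)
  finally show ?thesis .
qed

lemma Ssum_if: "Ssum n h x Q = (\<Sum>i<n. if Q i then relu (x - real i * h) else 0)"
proof -
  have "Ssum n h x Q = (\<Sum>i\<in>{i\<in>{..<n}. Q i}. relu (x - real i * h))"
    unfolding Ssum_def by (rule sum.cong) auto
  also have "\<dots> = (\<Sum>i<n. if Q i then relu (x - real i * h) else 0)"
    by (rule sum.inter_filter) simp
  finally show ?thesis .
qed

lemma combine:
  assumes "\<And>i. t i \<in> {-2,-1,0,1,2}"
  shows "(Ssum n h x (\<lambda>i. 1 \<le> t i) + Ssum n h x (\<lambda>i. 2 \<le> t i))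
       - (Ssum n h x (\<lambda>i. t i \<le> -1) + Ssum n h x (\<lambda>i. t i \<le> -2))
       = (\<Sum>i<n. of_int (t i) * relu (x - real i * h))"
  unfolding Ssum_if sum.distrib[symmetric] sum_subtractf[symmetric]
proof (rule sum.cong)
  fix i
  show "(if 1 \<le> t i then relu (x - real i * h) else 0) + (if 2 \<le> t i then relu (x - real i * h) else 0) -
        ((if t i \<le> - 1 then relu (x - real i * h) else 0) + (if t i \<le> - 2 then relu (x - real i * h) else 0)) =
        of_int (t i) * relu (x - real i * h)"
  proof -
    have "t i = -2 \<or> t i = -1 \<or> t i = 0 \<or> t i = 1 \<or> t i = 2" using assms[of i] by auto
    then show ?thesis by (elim disjE) auto
  qed
qed simp

lemma construct:
  assumes F: "F11 f" and e: "0 < \<epsilon>" "\<epsilon> < 1"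
  shows "\<exists>N. valid_net N \<and> card (weight_values N) \<le> 2 \<and> (\<forall>x\<in>{0..1}. \<bar>net_fun N x - f x\<bar> \<le> \<epsilon>) \<and>
     real (depth N) \<le> 2 * log 2 (1/\<epsilon>) + 11 \<and> real (num_weights N) \<le> 640 / \<epsilon>"
proof -
  define Lg where "Lg = log 2 (1/\<epsilon>)"
  have Lg0: "0 < Lg" unfolding Lg_def using e by simp
  define c where "c = nat \<lceil>Lg\<rceil>"
  have c1: "Lg \<le> real c" unfolding c_def using Lg0 by linarith
  have c2: "real c < Lg + 1" unfolding c_def using Lg0 by linarith
  have pLg: "2 powr Lg = 1/\<epsilon>" unfolding Lg_def using e by simp
  have pc: "(2::real)^c = 2 powr real c" by (simp add: powr_realpow)
  have lo: "1/\<epsilon> \<le> 2^c" unfolding pc pLg[symmetric] using c1 by (intro powr_mono) auto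
  have hi: "(2::real)^c \<le> 2/\<epsilon>"
  proof -
    have "(2::real) powr real c \<le> 2 powr (Lg + 1)" using c2 by (intro powr_mono) auto
    also have "\<dots> = 2 / \<epsilon>" using pLg by (simp add: powr_add)
    finally show ?thesis unfolding pc .
  qed
  define m where "m = c + 3"
  have m3: "3 \<le> m" unfolding m_def by simp
  define n :: nat where "n = 2^m"
  have rn: "real n = 8 * 2^c" unfolding n_def m_def by (simp add: power_add)
  have npos: "n > 0" unfolding n_def by simp
  have n8: "(8::real) / \<epsilon> \<le> real n" using lo e unfolding rn by (simp add: field_simps)
  have n16: "real n \<le> 16 / \<epsilon>" using hi e unfolding rn by (simp add: field_simps)
  define h where "h = 1 / real n"
  have h0: "0 < h" unfolding h_def using npos by simp
  have h3: "3 * h \<le> \<epsilon>"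
  proof -
    have "8 \<le> \<epsilon> * real n" using n8 e by (simp add: field_simps)
    then show ?thesis unfolding h_def using npos e by (simp add: field_simps)
  qed
  have f0: "\<bar>f 0\<bar> \<le> 1" using F unfolding F11_def by auto
  define j0 :: int where "j0 = max (1 - int n) \<lfloor>real n * f 0\<rfloor>"
  have j0n: "j0 \<le> int n"
  proof -
    have "real n * f 0 \<le> real n" using f0 npos by (simp add: mult_left_le)
    then have "\<lfloor>real n * f 0\<rfloor> \<le> int n" by linarith
    then show ?thesis unfolding j0_def using npos by simp
  qed
  define a0 where "a0 = real_of_int j0 * h"
  have a0e: "\<bar>a0 - f 0\<bar> \<le> h"
  proof (cases "1 - int n \<le> \<lfloor>real n * f 0\<rfloor>")
    case True
    then have "j0 = \<lfloor>real n * f 0\<rfloor>" unfolding j0_def by simp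
    then have "real_of_int j0 \<le> real n * f 0" "real n * f 0 < real_of_int j0 + 1" by linarith+
    then have "\<bar>real_of_int j0 - real n * f 0\<bar> \<le> 1" by linarith
    then have "\<bar>real_of_int j0 - real n * f 0\<bar> / real n \<le> 1 / real n" using npos by (simp add: divide_right_mono)
    moreover have "\<bar>real_of_int j0 - real n * f 0\<bar> / real n = \<bar>a0 - f 0\<bar>"
      unfolding a0_def h_def using npos by (simp add: field_simps abs_div_pos[symmetric])
    ultimately show ?thesis unfolding h_def by simp
  next
    case False
    then have j: "j0 = 1 - int n" unfolding j0_def by simp
    have "real n * f 0 < 1 - real n" using False by linarith
    moreover have "real n * (-1) \<le> real n * f 0" using f0 by (intro mult_left_mono) auto
    ultimately have "\<bar>real_of_int j0 - real n * f 0\<bar> \<le> 1" unfolding j by simp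
    then have "\<bar>real_of_int j0 - real n * f 0\<bar> / real n \<le> 1 / real n" using npos by (simp add: divide_right_mono)
    moreover have "\<bar>real_of_int j0 - real n * f 0\<bar> / real n = \<bar>a0 - f 0\<bar>"
      unfolding a0_def h_def using npos by (simp add: field_simps abs_div_pos[symmetric])
    ultimately show ?thesis unfolding h_def by simp
  qed
  define K where "K = nat (int n - j0)"
  have rK: "real K = real n - real_of_int j0" unfolding K_def using j0n by simp
  have K2: "K < 2 * 2^m"
  proof -
    have "1 - int n \<le> j0" unfolding j0_def by simp
    then have "int n - j0 < 2 * int n" using npos by simp
    moreover have "int K = int n - j0" unfolding K_def using j0n by simp
    ultimately have "int K < int (2 * n)" by simp
    then show ?thesis unfolding n_def by linarith
  qed
  define t where "t = tau f h a0"
  define Net where "Net = netw m h t K"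
  have lip: "\<And>x y. 0 \<le> y \<Longrightarrow> y \<le> x \<Longrightarrow> x \<le> 1 \<Longrightarrow> \<bar>f x - f y\<bar> \<le> x - y"
    using F11_lip[OF F] by blast
  have hn: "h * 2^m = 1" unfolding h_def n_def by simp
  have out: "net_fun Net x = Gf f h a0 n x" if x: "0 \<le> x" for x
  proof -
    have "net_fun Net x = (Ssum n h x (\<lambda>i. 1 \<le> t i) + Ssum n h x (\<lambda>i. 2 \<le> t i))
       - (h * 2^m) * (Ssum n h x (\<lambda>i. t i \<le> -1) + Ssum n h x (\<lambda>i. t i \<le> -2)) - h * real K + 1"
      unfolding Net_def netw_eval[OF m3 less_imp_le[OF h0] x K2] n_def by (simp add: algebra_simps)
    also have "\<dots> = (\<Sum>i<n. of_int (t i) * relu (x - real i * h)) + (1 - h * real K)"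
      unfolding hn using combine[of t n h x] tau_range[of f h a0] unfolding t_def by simp
    also have "1 - h * real K = a0"
      unfolding rK a0_def h_def using npos by (simp add: field_simps)
    finally show ?thesis unfolding Gf_def t_def by simp
  qed
  have err: "\<forall>x\<in>{0..1}. \<bar>net_fun Net x - f x\<bar> \<le> \<epsilon>"
  proof
    fix x :: real assume "x \<in> {0..1}"
    then have x: "0 \<le> x" "x \<le> 1" by auto
    have "\<bar>Gf f h a0 n x - f x\<bar> \<le> 3 * h" by (rule Gf_err[OF lip npos h_def a0e x])
    then show "\<bar>net_fun Net x - f x\<bar> \<le> \<epsilon>" using out[OF x(1)] h3 by simp
  qed
  have dep: "real (depth Net) \<le> 2 * log 2 (1/\<epsilon>) + 11"
  proof -
    have "depth Net = 2 * m + 3" unfolding Net_def by (rule netw_depth) (use m3 in simp)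
    then have "real (depth Net) = 2 * real c + 9" unfolding m_def by simp
    then show ?thesis using c2 unfolding Lg_def by simp
  qed
  have nw: "real (num_weights Net) \<le> 640 / \<epsilon>"
  proof -
    have "num_weights Net \<le> 40 * n" unfolding Net_def n_def by (rule netw_weights[OF m3])
    then have "real (num_weights Net) \<le> 40 * real n" by (simp add: of_nat_le_iff[symmetric] del: of_nat_le_iff) 
    also have "\<dots> \<le> 40 * (16 / \<epsilon>)" using n16 by simp
    finally show ?thesis by simp
  qed
  show ?thesis
    using netw_valid netw_card err dep nw unfolding Net_def by blast
qed

theorem theorem3:
  shows "\<exists>C \<epsilon>0::real. C > 0 \<and> 0 < \<epsilon>0 \<and> \<epsilon>0 < 1 \<and>
    (\<forall>lam::nat. lam \<ge> 2 \<longrightarrow>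
      (\<forall>f. F11 f \<longrightarrow>
        (\<forall>\<epsilon>::real. 0 < \<epsilon> \<and> \<epsilon> < 1 \<longrightarrow>
          (\<exists>N. valid_net N \<and> card (weight_values N) \<le> lam \<and>
               (\<forall>x\<in>{0..1}. \<bar>net_fun N x - f x\<bar> \<le> \<epsilon>) \<and>
               (\<epsilon> < \<epsilon>0 \<longrightarrow>
                  real (depth N) \<le> C * (real lam * (log 2 (log 2 (1/\<epsilon>))) powr (1 / (real lam - 1))
                                         + log 2 (1/\<epsilon>)) \<and>
                  real (num_weights N) \<le> C * (real lam * (log 2 (log 2 (1/\<epsilon>))) powr (1 / (real lam - 1) + 1)
                                         + 1/\<epsilon>) \<and>
                  storage_bits lam N \<le> C * (log 2 (real lam) *
                      (real lam * (log 2 (log 2 (1/\<epsilon>))) powr (1 / (real lam - 1) + 1) + 1/\<epsilon>)))))))"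
proof (rule exI[of _ "1000::real"], rule exI[of _ "1/4::real"], intro conjI allI impI)
  fix lam :: nat and f and \<epsilon> :: real
  assume lam: "2 \<le> lam" and F: "F11 f" and e: "0 < \<epsilon> \<and> \<epsilon> < 1"
  obtain N where v: "valid_net N" and c: "card (weight_values N) \<le> 2"
    and er: "\<forall>x\<in>{0..1}. \<bar>net_fun N x - f x\<bar> \<le> \<epsilon>"
    and d: "real (depth N) \<le> 2 * log 2 (1/\<epsilon>) + 11" and w: "real (num_weights N) \<le> 640 / \<epsilon>"
    using construct[OF F] e by blast
  show "\<exists>N. valid_net N \<and> card (weight_values N) \<le> lam \<and>
               (\<forall>x\<in>{0..1}. \<bar>net_fun N x - f x\<bar> \<le> \<epsilon>) \<and>
               (\<epsilon> < 1/4 \<longrightarrow>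
                  real (depth N) \<le> 1000 * (real lam * (log 2 (log 2 (1/\<epsilon>))) powr (1 / (real lam - 1))
                                         + log 2 (1/\<epsilon>)) \<and>
                  real (num_weights N) \<le> 1000 * (real lam * (log 2 (log 2 (1/\<epsilon>))) powr (1 / (real lam - 1) + 1)
                                         + 1/\<epsilon>) \<and>
                  storage_bits lam N \<le> 1000 * (log 2 (real lam) *
                      (real lam * (log 2 (log 2 (1/\<epsilon>))) powr (1 / (real lam - 1) + 1) + 1/\<epsilon>)))"
  proof -
    have c': "card (weight_values N) \<le> lam" using c lam by simp
    have bnds: "real (depth N) \<le> 1000 * (real lam * (log 2 (log 2 (1/\<epsilon>))) powr (1 / (real lam - 1))
                                         + log 2 (1/\<epsilon>)) \<and>
                  real (num_weights N) \<le> 1000 * (real lam * (log 2 (log 2 (1/\<epsilon>))) powr (1 / (real lam - 1) + 1)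
                                         + 1/\<epsilon>) \<and>
                  storage_bits lam N \<le> 1000 * (log 2 (real lam) *
                      (real lam * (log 2 (log 2 (1/\<epsilon>))) powr (1 / (real lam - 1) + 1) + 1/\<epsilon>))"
      if e4: "\<epsilon> < 1/4"
    proof (intro conjI)
    let ?A = " real lam * (log 2 (log 2 (1/\<epsilon>))) powr (1 / (real lam - 1))"
    let ?B = " real lam * (log 2 (log 2 (1/\<epsilon>))) powr (1 / (real lam - 1) + 1)"
    have A0: "0 \<le> ?A" by simp
    have B0: "0 \<le> ?B" by simp
    have "4 < 1/\<epsilon>" using e e4 by (simp add: field_simps)
    then have "log 2 4 < log 2 (1/\<epsilon>)" using e by (subst log_less_cancel_iff) auto
    moreover have "log 2 (4::real) = 2"
    proof -
      have "(4::real) = 2 powr 2" by simp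
      then have "log 2 (4::real) = log 2 (2 powr 2)" by (simp only:)
      also have "\<dots> = 2" by (rule log_powr_cancel) auto
      finally show ?thesis .
    qed
    ultimately have Lg: "2 < log 2 (1/\<epsilon>)" by simp
    have dist: "1000 * (?A + log 2 (1/\<epsilon>)) = 1000 * ?A + 1000 * log 2 (1/\<epsilon>)" by (simp add: ring_distribs)
    show "real (depth N) \<le> 1000 * (?A + log 2 (1/\<epsilon>))" unfolding dist using d Lg A0 by linarith
    have ie: "0 < 1/\<epsilon>" using e by simp
    have "640 / \<epsilon> \<le> 1000 * (1/\<epsilon>)" using e by (simp add: divide_right_mono)
    moreover have "1000 * (?B + 1/\<epsilon>) = 1000 * ?B + 1000 * (1/\<epsilon>)" by (simp add: ring_distribs)
    ultimately show wb: "real (num_weights N) \<le> 1000 * (?B + 1/\<epsilon>)" using w B0 by linarith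
    have ll: "1 \<le> log 2 (real lam)" using lam by simp
    have "storage_bits lam N = real (num_weights N) * log 2 (real lam)" unfolding storage_bits_def ..
    also have "\<dots> \<le> 1000 * (?B + 1/\<epsilon>) * log 2 (real lam)"
      using wb ll by (intro mult_right_mono) auto
    finally show "storage_bits lam N \<le> 1000 * (log 2 (real lam) * (?B + 1/\<epsilon>))"
      by (simp add: algebra_simps)
  qed
  show ?thesis using v c' er bnds by blast
  qed
qed simp_all

end
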